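(* Let $d\geq 3$ and let $(M,g)$ be the Kasner spacetime $M=(0,\infty)\times\mathbb{R}^d$, $g=-dt^2+\sum_{i=1}^d t^{2p_i}\,dx_i^2$, with $\sum_i p_i=1$, $\sum_i p_i^2=1$ and at least one $p_i<0$, time-oriented by $\partial_t$. Let $\tau:[a,b)\to M$ be a future (respectively past) directed timelike geodesic that is future (respectively past) inextendible. Then $(t\circ\tau)(s)\to\infty$ (respectively $(t\circ\tau)(s)\to 0$) as $s\to b$.
   Context: $t:M\to(0,\infty)$ is the first coordinate. A curve $\tau:[a,b)\to M$ is future (past) inextendible if it does not extend continuously to $b$ (in the respective time direction). *)

theory Defs
  imports "HOL-Analysis.Analysis"
begin

definition kasner_M :: "(real \<times> (real^'d)) set" where
  "kasner_M = {q. fst q > 0}"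

definition kasner_exponents :: "real^'d \<Rightarrow> bool" where
  "kasner_exponents p \<longleftrightarrow> (\<Sum>i\<in>UNIV. p$i) = 1 \<and> (\<Sum>i\<in>UNIV. (p$i)^2) = 1 \<and> (\<exists>i. p$i < 0)"

definition kasner_g :: "real^'d \<Rightarrow> real \<Rightarrow> real \<times> (real^'d) \<Rightarrow> real \<times> (real^'d) \<Rightarrow> real" where
  "kasner_g p t v w = - fst v * fst w + (\<Sum>i\<in>UNIV. t powr (2 * p$i) * (snd v)$i * (snd w)$i)"

definition half_open :: "real \<Rightarrow> ereal \<Rightarrow> real set" where
  "half_open a b = {s. a \<le> s \<and> ereal s < b}"

definition approach :: "ereal \<Rightarrow> real filter" where
  "approach b = (if b = \<infinity> then at_top else at_left (real_of_ereal b))"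

definition kasner_geodesic :: "real^'d \<Rightarrow> real set \<Rightarrow> (real \<Rightarrow> real \<times> (real^'d)) \<Rightarrow> bool" where
  "kasner_geodesic p I \<gamma> \<longleftrightarrow>
     (\<exists>\<gamma>' \<gamma>''. \<forall>s\<in>I.
        \<gamma> s \<in> kasner_M \<and>
        (\<gamma> has_vector_derivative \<gamma>' s) (at s within I) \<and>
        (\<gamma>' has_vector_derivative \<gamma>'' s) (at s within I) \<and>
        fst (\<gamma>'' s) + (\<Sum>i\<in>UNIV. p$i * fst (\<gamma> s) powr (2 * p$i - 1) * ((snd (\<gamma>' s))$i)^2) = 0 \<and>
        (\<forall>i. (snd (\<gamma>'' s))$i + 2 * (p$i / fst (\<gamma> s)) * fst (\<gamma>' s) * (snd (\<gamma>' s))$i = 0))"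

definition timelike_directed :: "real^'d \<Rightarrow> real set \<Rightarrow> (real \<Rightarrow> real \<times> (real^'d)) \<Rightarrow> bool \<Rightarrow> bool" where
  "timelike_directed p I \<gamma> fut \<longleftrightarrow>
     (\<forall>s\<in>I. \<exists>v. (\<gamma> has_vector_derivative v) (at s within I) \<and>
        kasner_g p (fst (\<gamma> s)) v v < 0 \<and>
        (if fut then kasner_g p (fst (\<gamma> s)) v (1, 0) < 0 else kasner_g p (fst (\<gamma> s)) v (1, 0) > 0))"

definition inextendible :: "ereal \<Rightarrow> (real \<Rightarrow> real \<times> (real^'d)) \<Rightarrow> bool" where
  "inextendible b \<gamma> \<longleftrightarrow> \<not> (\<exists>q\<in>kasner_M. (\<gamma> \<longlongrightarrow> q) (approach b))"

end

theory Submission imports Defs begin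

lemma vd_fst:
  assumes "(f has_vector_derivative v) F"
  shows "((\<lambda>s. fst (f s)) has_real_derivative fst v) F"
  using bounded_linear.has_vector_derivative[OF bounded_linear_fst assms]
  by (simp add: has_real_derivative_iff_has_vector_derivative)

lemma vd_nth:
  fixes f :: "real \<Rightarrow> real \<times> (real^'d)"
  assumes "(f has_vector_derivative v) F"
  shows "((\<lambda>s. snd (f s) $ i) has_real_derivative snd v $ i) F"
proof -
  have bl: "bounded_linear (\<lambda>x::real \<times> (real^'d). snd x $ i)"
    using bounded_linear_compose[OF bounded_linear_vec_nth[of i] bounded_linear_snd] by (simp add: o_def)
  show ?thesis
  using bounded_linear.has_vector_derivative[OF bl assms]
  by (simp add: has_real_derivative_iff_has_vector_derivative)
qed

lemma nontriv:
  assumes "s \<in> half_open a b" "ereal a < b"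
  shows "at s within half_open a b \<noteq> bot"
proof -
  obtain c where c: "s < c" "{s..c} \<subseteq> half_open a b"
  proof (cases b)
    case (real B)
    show ?thesis using assms real
      by (intro that[of "(s+B)/2"]) (auto simp: half_open_def)
  next
    case PInf
    show ?thesis using assms PInf
      by (intro that[of "s+1"]) (auto simp: half_open_def)
  next
    case MInf
    then show ?thesis using assms by auto
  qed
  have "s islimpt {s..c}"
    using c(1) by (intro islimpt_closure_open[where s="{s<..<c}"]) auto
  then have "s islimpt half_open a b" using c(2) islimpt_subset by blast
  then show ?thesis by (simp add: trivial_limit_within)
qed

lemma bounded_deriv_limit:
  fixes f :: "real \<Rightarrow> 'b::euclidean_space"
  assumes "a < B"
    and d: "\<And>s. s \<in> {a..<B} \<Longrightarrow> (f has_vector_derivative f' s) (at s within {a..<B})"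
    and K: "\<And>s. s \<in> {a..<B} \<Longrightarrow> norm (f' s) \<le> K"
  shows "\<exists>l. (f \<longlongrightarrow> l) (at_left B)"
proof -
  have K0: "0 \<le> K" 
  proof -
    have "a \<in> {a..<B}" using assms(1) by simp
    from K[OF this] show ?thesis using norm_ge_zero[of "f' a"] by linarith
  qed
  have L: "norm (f x - f y) \<le> K * norm (x - y)" if "x \<in> {a..<B}" "y \<in> {a..<B}" for x y
  proof (rule differentiable_bound[where f' = "\<lambda>s h. h *\<^sub>R f' s"])
    show "convex {a..<B}" by simp
    show "(f has_derivative (\<lambda>h. h *\<^sub>R f' s)) (at s within {a..<B})" if "s \<in> {a..<B}" for s
      using d[OF that] by (simp add: has_vector_derivative_def)
    show "onorm (\<lambda>h. h *\<^sub>R f' s) \<le> K" if "s \<in> {a..<B}" for s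
      using K[OF that] by (simp add: onorm_scaleR_left[OF bounded_linear_ident] onorm_id)
  qed (use that in auto)
  have "K-lipschitz_on {a..<B} f"
    using L K0 by (auto simp: lipschitz_on_def dist_norm)
  then have uc: "uniformly_continuous_on {a..<B} f"
    by (rule lipschitz_on_uniformly_continuous)
  have "B \<in> closure {a..<B}" using assms(1) by simp
  then obtain l where l: "(f \<longlongrightarrow> l) (at B within {a..<B})"
    using uniformly_continuous_on_extension_at_closure[OF uc] by blast
  have "at B within {a..<B} = at B within {..<B}"
    by (rule at_within_nhd[where S="{a<..}"]) (use assms(1) in auto)
  with l show ?thesis by auto
qed

lemma powr_bound:
  fixes t m M e :: real
  assumes "0 < m" "m \<le> t" "t \<le> M"
  shows "t powr e \<le> m powr e + M powr e"
proof (cases "e \<ge> 0")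
  case True
  then have "t powr e \<le> M powr e" using assms by (intro powr_mono2) auto
  then show ?thesis by (smt (verit) powr_ge_zero)
next
  case False
  have "t powr e = inverse (t powr (-e))" using assms by (simp add: powr_minus)
  also have "\<dots> \<le> inverse (m powr (-e))" using assms False
    by (intro le_imp_inverse_le powr_mono2) auto
  also have "\<dots> = m powr e" using assms by (simp add: powr_minus)
  finally show ?thesis by (smt (verit) powr_ge_zero)
qed

lemma abs_le_sq: "\<bar>x::real\<bar> \<le> 1 + x^2"
proof (cases "\<bar>x\<bar> \<le> 1")
  case True then show ?thesis by (smt (verit) zero_le_power2)
next
  case False
  then have "\<bar>x\<bar> * 1 \<le> \<bar>x\<bar> * \<bar>x\<bar>" by (intro mult_left_mono) auto
  then show ?thesis by (simp add: power2_eq_square abs_mult_self_eq)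
qed

lemma powr_m1: "(t::real) > 0 \<Longrightarrow> t powr (e - 1) = t powr e / t"
  by (simp add: powr_diff)

theorem lemma3p2:
  fixes p :: "real^'d" and \<gamma> :: "real \<Rightarrow> real \<times> (real^'d)" and a :: real and b :: ereal
  assumes "CARD('d) \<ge> 3"
    and "kasner_exponents p"
    and "ereal a < b"
    and "kasner_geodesic p (half_open a b) \<gamma>"
    and "inextendible b \<gamma>"
  shows "(timelike_directed p (half_open a b) \<gamma> True \<longrightarrow>
            filterlim (\<lambda>s. fst (\<gamma> s)) at_top (approach b))
       \<and> (timelike_directed p (half_open a b) \<gamma> False \<longrightarrow>
            ((\<lambda>s. fst (\<gamma> s)) \<longlongrightarrow> 0) (approach b))"
proof -
  define I where "I = half_open a b"
  obtain g1 g2 where G: "\<forall>s\<in>I.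
        \<gamma> s \<in> kasner_M \<and>
        (\<gamma> has_vector_derivative g1 s) (at s within I) \<and>
        (g1 has_vector_derivative g2 s) (at s within I) \<and>
        fst (g2 s) + (\<Sum>i\<in>UNIV. p$i * fst (\<gamma> s) powr (2 * p$i - 1) * ((snd (g1 s))$i)^2) = 0 \<and>
        (\<forall>i. (snd (g2 s))$i + 2 * (p$i / fst (\<gamma> s)) * fst (g1 s) * (snd (g1 s))$i = 0)"
    using assms(4) unfolding kasner_geodesic_def I_def by blast
  define T where "T s = fst (\<gamma> s)" for s
  define T1 where "T1 s = fst (g1 s)" for s
  define T2 where "T2 s = fst (g2 s)" for s
  define X1 where "X1 i s = snd (g1 s) $ i" for i s
  define X2 where "X2 i s = snd (g2 s) $ i" for i s
  have Icases: "(b = \<infinity> \<and> I = {a..}) \<or> (\<exists>B. b = ereal B \<and> a < B \<and> I = {a..<B})"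
    using assms(3) by (cases b) (auto simp: I_def half_open_def)
  have convI: "convex I" using Icases by auto
  have aI: "a \<in> I" using assms(3) by (simp add: I_def half_open_def)
  have segI: "{x..y} \<subseteq> I" if "x \<in> I" "y \<in> I" for x y using Icases that by auto
  have Tpos: "T s > 0" if "s \<in> I" for s using G that by (auto simp: T_def kasner_M_def)
  have dg: "(\<gamma> has_vector_derivative g1 s) (at s within I)" if "s \<in> I" for s using G that by auto
  have dT: "(T has_real_derivative T1 s) (at s within I)" if "s \<in> I" for s
    using vd_fst[OF dg[OF that]] unfolding T_def T1_def by simp
  have dT1: "(T1 has_real_derivative T2 s) (at s within I)" if "s \<in> I" for s
    using vd_fst[of g1 "g2 s"] G that unfolding T1_def T2_def by auto
  have dX1: "(X1 i has_real_derivative X2 i s) (at s within I)" if "s \<in> I" for s i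
    using vd_nth[of g1 "g2 s"] G that unfolding X1_def X2_def by auto
  have e1: "T2 s + (\<Sum>i\<in>UNIV. p$i * T s powr (2 * p$i - 1) * (X1 i s)^2) = 0" if "s \<in> I" for s
    using G that unfolding T_def T2_def X1_def by auto
  have e2: "X2 i s = - (2 * (p$i / T s) * T1 s * X1 i s)" if "s \<in> I" for s i
    using G that unfolding T_def T1_def X1_def X2_def by (auto simp: add_eq_0_iff)
  have dW: "((\<lambda>s. T s powr (2*p$i)) has_real_derivative (2*p$i * T s powr (2*p$i - 1)) * T1 s) (at s within I)"
    if "s \<in> I" for s i
    using DERIV_chain2[OF has_real_derivative_powr[OF Tpos[OF that]] dT[OF that]] by simp
  have "\<exists>c. \<forall>s\<in>I. T s powr (2*p$i) * X1 i s = c" for i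
  proof (rule has_field_derivative_zero_constant[OF convI])
    fix s assume s: "s \<in> I"
    have "((\<lambda>s. T s powr (2*p$i) * X1 i s) has_real_derivative
       (2*p$i * T s powr (2*p$i - 1)) * T1 s * X1 i s + X2 i s * T s powr (2*p$i)) (at s within I)"
      by (rule DERIV_mult[OF dW[OF s] dX1[OF s]])
    moreover have "(2*p$i * T s powr (2*p$i - 1)) * T1 s * X1 i s + X2 i s * T s powr (2*p$i) = 0"
      using Tpos[OF s] unfolding e2[OF s] powr_m1[OF Tpos[OF s]] by (simp add: field_simps)
    ultimately show "((\<lambda>s. T s powr (2*p$i) * X1 i s) has_real_derivative 0) (at s within I)" by simp
  qed
  then obtain U where U: "\<And>i s. s \<in> I \<Longrightarrow> T s powr (2*p$i) * X1 i s = U i" by metis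
  define E where "E s = (\<Sum>i\<in>UNIV. T s powr (2*p$i) * (X1 i s)^2) - (T1 s)^2" for s
  have "\<exists>c. \<forall>s\<in>I. E s = c"
  proof (rule has_field_derivative_zero_constant[OF convI])
    fix s assume s: "s \<in> I"
    have d2: "((\<lambda>s. T s powr (2*p$i) * (X1 i s)^2) has_real_derivative
       (2*p$i * T s powr (2*p$i - 1)) * T1 s * (X1 i s)^2 + (2 * (X2 i s * X1 i s)) * T s powr (2*p$i)) (at s within I)" for i
      using DERIV_mult[OF dW[OF s] DERIV_power[OF dX1[OF s], where n=2]] by simp
    have d1: "((\<lambda>s. (T1 s)^2) has_real_derivative 2 * (T2 s * T1 s)) (at s within I)"
      using DERIV_power[OF dT1[OF s], where n=2] by simp
    have dE: "(E has_real_derivative (\<Sum>i\<in>UNIV. (2*p$i * T s powr (2*p$i - 1)) * T1 s * (X1 i s)^2 + (2 * (X2 i s * X1 i s)) * T s powr (2*p$i)) - 2 * (T2 s * T1 s)) (at s within I)"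
      unfolding E_def[abs_def] by (rule DERIV_diff[OF DERIV_sum[OF d2] d1])
    have "(\<Sum>i\<in>UNIV. (2*p$i * T s powr (2*p$i - 1)) * T1 s * (X1 i s)^2 + (2 * (X2 i s * X1 i s)) * T s powr (2*p$i))
        = (\<Sum>i\<in>UNIV. -2 * T1 s * (p$i * T s powr (2 * p$i - 1) * (X1 i s)^2))"
      using Tpos[OF s] unfolding e2[OF s] powr_m1[OF Tpos[OF s]]
      by (intro sum.cong) (auto simp: field_simps power2_eq_square)
    also have "\<dots> = -2 * T1 s * (\<Sum>i\<in>UNIV. p$i * T s powr (2 * p$i - 1) * (X1 i s)^2)"
      by (rule sum_distrib_left[symmetric])
    also have "(\<Sum>i\<in>UNIV. p$i * T s powr (2 * p$i - 1) * (X1 i s)^2) = - T2 s"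
      using e1[OF s] by linarith
    finally have "(\<Sum>i\<in>UNIV. (2*p$i * T s powr (2*p$i - 1)) * T1 s * (X1 i s)^2 + (2 * (X2 i s * X1 i s)) * T s powr (2*p$i)) = 2 * (T2 s * T1 s)"
      by simp
    then show "(E has_real_derivative 0) (at s within I)" using dE by simp
  qed
  then obtain E0 where E0: "\<And>s. s \<in> I \<Longrightarrow> E s = E0" by metis
  have Eeq: "T1 s^2 = (\<Sum>i\<in>UNIV. T s powr (2*p$i) * (X1 i s)^2) - E0" if "s \<in> I" for s
    using E0[OF that] unfolding E_def by simp
  have T1sq: "T1 s^2 \<ge> -E0" if "s \<in> I" for s
    using Eeq[OF that] sum_nonneg[of UNIV "\<lambda>i. T s powr (2*p$i) * (X1 i s)^2"] by auto
  have X1eq: "X1 i s = U i * T s powr (-2*p$i)" if s: "s \<in> I" for s i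
  proof -
    have "T s powr (-2*p$i) * T s powr (2*p$i) = 1"
      using Tpos[OF s] by (simp add: powr_add[symmetric])
    then have "X1 i s = T s powr (-2*p$i) * (T s powr (2*p$i) * X1 i s)"
      by (metis mult.assoc mult_1)
    then show ?thesis using U[OF s] by simp
  qed
  have T1sq_eq: "T1 s^2 = (\<Sum>i\<in>UNIV. (U i)^2 * T s powr (-2*p$i)) - E0" if s: "s \<in> I" for s
  proof -
    have "T s powr (2*p$i) * (X1 i s)^2 = (U i)^2 * T s powr (-2*p$i)" for i
    proof -
      have "T s powr (2*p$i) * (X1 i s)^2 = (T s powr (2*p$i) * X1 i s) * X1 i s"
        by (simp add: power2_eq_square)
      also have "\<dots> = U i * (U i * T s powr (-2*p$i))" using U[OF s] X1eq[OF s] by simp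
      finally show ?thesis by (simp add: power2_eq_square)
    qed
    then show ?thesis using Eeq[OF s] by simp
  qed
  have tl: "E0 < 0 \<and> (\<forall>s\<in>I. if fut then T1 s > 0 else T1 s < 0)"
    if tld: "timelike_directed p I \<gamma> fut" for fut
  proof -
    have *: "E s < 0 \<and> (if fut then T1 s > 0 else T1 s < 0)" if s: "s \<in> I" for s
    proof -
      obtain v where v: "(\<gamma> has_vector_derivative v) (at s within I)"
        "kasner_g p (fst (\<gamma> s)) v v < 0"
        "(if fut then kasner_g p (fst (\<gamma> s)) v (1, 0) < 0 else kasner_g p (fst (\<gamma> s)) v (1, 0) > 0)"
        using tld s unfolding timelike_directed_def by blast
      have "v = g1 s"
        using vector_derivative_unique_within[OF nontriv[OF s[unfolded I_def] assms(3)] v(1)[unfolded I_def] dg[OF s, unfolded I_def]] .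
      moreover have "kasner_g p (fst (\<gamma> s)) (g1 s) (g1 s) = E s"
        unfolding kasner_g_def E_def T_def T1_def X1_def by (simp add: power2_eq_square mult.assoc)
      moreover have "kasner_g p (fst (\<gamma> s)) (g1 s) (1,0) = - T1 s"
        unfolding kasner_g_def T1_def by simp
      ultimately show ?thesis using v by (auto split: if_splits)
    qed
    show ?thesis using *[OF aI] * E0[OF aI] by auto
  qed
  have kap: "\<exists>\<kappa>>0. \<forall>s\<in>I. (if fut then \<kappa> \<le> T1 s else T1 s \<le> -\<kappa>)"
    if tld: "timelike_directed p I \<gamma> fut" for fut
  proof (intro exI[of _ "sqrt (-E0)"] conjI ballI)
    show "sqrt (-E0) > 0" using tl[OF tld] by simp
    fix s assume s: "s \<in> I"
    have "sqrt (-E0) \<le> sqrt (T1 s^2)" using T1sq[OF s] by (intro real_sqrt_le_mono) auto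
    then have "sqrt (-E0) \<le> \<bar>T1 s\<bar>" by simp
    then show "if fut then sqrt (-E0) \<le> T1 s else T1 s \<le> - sqrt (-E0)"
      using tl[OF tld] s by (auto split: if_splits)
  qed
  have mvt: "\<exists>\<xi>\<in>{x..y}. T y - T x = T1 \<xi> * (y - x)" if "x \<in> I" "y \<in> I" "x \<le> y" for x y
  proof (rule mvt_very_simple[of x y T "\<lambda>\<xi>. (*) (T1 \<xi>)"])
    show "x \<le> y" by fact
    fix \<xi> assume "x \<le> \<xi>" "\<xi> \<le> y"
    then have "\<xi> \<in> I" using segI[OF that(1,2)] by auto
    then show "(T has_derivative (*) (T1 \<xi>)) (at \<xi> within {x..y})"
      using DERIV_subset[OF dT segI[OF that(1,2)]] by (simp add: has_field_derivative_def)
  qed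
  have key: False if B: "b = ereal B" "a < B" and m: "0 < m"
    and bnd: "\<And>s. s \<in> I \<Longrightarrow> m \<le> T s \<and> T s \<le> M" for B m M
  proof -
    have IB: "I = {a..<B}" using Icases B by auto
    define C where "C i = m powr (-2*p$i) + M powr (-2*p$i)" for i
    have Cb: "T s powr (-2*p$i) \<le> C i" if "s \<in> I" for s i
      unfolding C_def using bnd[OF that] m by (intro powr_bound) auto
    define K where "K = (1 + ((\<Sum>i\<in>UNIV. (U i)^2 * C i) - E0)) + (\<Sum>i\<in>UNIV. \<bar>U i\<bar> * C i)"
    have nb: "norm (g1 s) \<le> K" if s: "s \<in> I" for s
    proof -
      have "norm (g1 s) \<le> norm (fst (g1 s)) + norm (snd (g1 s))"
        using norm_Pair_le[of "fst (g1 s)" "snd (g1 s)"] by simp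
      also have "\<dots> \<le> \<bar>T1 s\<bar> + (\<Sum>i\<in>UNIV. \<bar>X1 i s\<bar>)"
        using norm_le_l1_cart[of "snd (g1 s)"] by (simp add: T1_def X1_def)
      also have "\<dots> \<le> (1 + ((\<Sum>i\<in>UNIV. (U i)^2 * C i) - E0)) + (\<Sum>i\<in>UNIV. \<bar>U i\<bar> * C i)"
      proof (rule add_mono)
        have "T1 s^2 \<le> (\<Sum>i\<in>UNIV. (U i)^2 * C i) - E0"
          unfolding T1sq_eq[OF s] using Cb[OF s]
          by (intro diff_right_mono sum_mono mult_left_mono) auto
        then show "\<bar>T1 s\<bar> \<le> 1 + ((\<Sum>i\<in>UNIV. (U i)^2 * C i) - E0)"
          using abs_le_sq[of "T1 s"] by linarith
        show "(\<Sum>i\<in>UNIV. \<bar>X1 i s\<bar>) \<le> (\<Sum>i\<in>UNIV. \<bar>U i\<bar> * C i)"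
        proof (rule sum_mono)
          fix i
          have "\<bar>X1 i s\<bar> = \<bar>U i\<bar> * T s powr (-2*p$i)" unfolding X1eq[OF s] by (simp add: abs_mult)
          also have "\<dots> \<le> \<bar>U i\<bar> * C i" using Cb[OF s] by (intro mult_left_mono) auto
          finally show "\<bar>X1 i s\<bar> \<le> \<bar>U i\<bar> * C i" .
        qed
      qed
      finally show ?thesis unfolding K_def .
    qed
    obtain l where l: "(\<gamma> \<longlongrightarrow> l) (at_left B)"
      using bounded_deriv_limit[of a B \<gamma> g1 K] dg nb IB B(2) by auto
    have Tl: "(T \<longlongrightarrow> fst l) (at_left B)" unfolding T_def using tendsto_fst[OF l] .
    have ev: "eventually (\<lambda>s. m \<le> T s) (at_left B)"
      using eventually_at_left_real[OF B(2)] by eventually_elim (use bnd IB in auto)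
    have "m \<le> fst l"
      by (rule tendsto_lowerbound[OF Tl ev]) (simp add: trivial_limit_at_left_real)
    then have "l \<in> kasner_M" using m by (simp add: kasner_M_def)
    moreover have "approach b = at_left B" using B(1) by (simp add: approach_def)
    ultimately show False using assms(5) l unfolding inextendible_def by auto
  qed
  show ?thesis
  proof (intro conjI impI)
    assume "timelike_directed p (half_open a b) \<gamma> True"
    then have tf: "timelike_directed p I \<gamma> True" by (simp add: I_def)
    obtain \<kappa> where \<kappa>: "\<kappa> > 0" "\<And>s. s \<in> I \<Longrightarrow> \<kappa> \<le> T1 s" using kap[OF tf] by auto
    have inc: "T y - T x \<ge> \<kappa> * (y - x)" if xy: "x \<in> I" "y \<in> I" "x \<le> y" for x y
    proof -
      obtain \<xi> where \<xi>: "\<xi> \<in> {x..y}" "T y - T x = T1 \<xi> * (y - x)" using mvt[OF xy] by blast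
      have "\<xi> \<in> I" using segI[OF xy(1,2)] \<xi>(1) by auto
      then show ?thesis unfolding \<xi>(2) using \<kappa>(2) xy(3) by (intro mult_right_mono) auto
    qed
    show "filterlim (\<lambda>s. fst (\<gamma> s)) at_top (approach b)"
    proof (cases "b = \<infinity>")
      case True
      then have IA: "I = {a..}" using Icases by auto
      have "eventually (\<lambda>s. Z \<le> T s) at_top" for Z
        unfolding eventually_at_top_linorder
      proof (intro exI[of _ "a + \<bar>Z - T a\<bar> / \<kappa>"] allI impI)
        fix s assume s: "a + \<bar>Z - T a\<bar> / \<kappa> \<le> s"
        have "0 \<le> \<bar>Z - T a\<bar> / \<kappa>" using \<kappa>(1) by simp
        then have sI: "s \<in> I" using s IA by auto
        have "\<bar>Z - T a\<bar> \<le> \<kappa> * (s - a)" using s \<kappa>(1) by (simp add: field_simps)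
        then show "Z \<le> T s" using inc[OF aI sI] sI IA by auto
      qed
      then show ?thesis using True by (simp add: approach_def filterlim_at_top T_def)
    next
      case False
      then obtain B where B: "b = ereal B" "a < B" "I = {a..<B}" using Icases by auto
      have "eventually (\<lambda>s. Z \<le> T s) (at_left B)" for Z
      proof (cases "\<exists>s0\<in>I. Z \<le> T s0")
        case True
        then obtain s0 where s0: "s0 \<in> I" "Z \<le> T s0" by auto
        have "s0 < B" using s0 B by auto
        show ?thesis using eventually_at_left_real[OF \<open>s0 < B\<close>]
        proof eventually_elim
          case (elim s)
          then have "s \<in> I" using s0 B by auto
          then show ?case using inc[OF s0(1) \<open>s \<in> I\<close>] elim s0 \<kappa>(1)
            by (smt (verit) greaterThanLessThan_iff mult_pos_pos)
        qed
      next
        case False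
        have "T a \<le> T s" if "s \<in> I" for s using inc[OF aI that] that B \<kappa>(1) by (smt (verit) atLeastLessThan_iff mult_nonneg_nonneg)
        then have False using key[OF B(1,2) Tpos[OF aI], of Z] False by fastforce
        then show ?thesis ..
      qed
      then show ?thesis using B by (simp add: approach_def filterlim_at_top T_def)
    qed
  next
    assume "timelike_directed p (half_open a b) \<gamma> False"
    then have tf: "timelike_directed p I \<gamma> False" by (simp add: I_def)
    obtain \<kappa> where \<kappa>: "\<kappa> > 0" "\<And>s. s \<in> I \<Longrightarrow> T1 s \<le> -\<kappa>" using kap[OF tf] by auto
    have dec: "T y - T x \<le> - \<kappa> * (y - x)" if xy: "x \<in> I" "y \<in> I" "x \<le> y" for x y
    proof -
      obtain \<xi> where \<xi>: "\<xi> \<in> {x..y}" "T y - T x = T1 \<xi> * (y - x)" using mvt[OF xy] by blast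
      have "\<xi> \<in> I" using segI[OF xy(1,2)] \<xi>(1) by auto
      then show ?thesis unfolding \<xi>(2) using mult_right_mono[OF \<kappa>(2)[OF \<open>\<xi> \<in> I\<close>], of "y - x"] xy(3) by simp
    qed
    have dec': "T y \<le> T x" if xy: "x \<in> I" "y \<in> I" "x \<le> y" for x y
    proof -
      have "0 \<le> \<kappa> * (y - x)" using \<kappa>(1) xy(3) by simp
      then show ?thesis using dec[OF xy] by simp
    qed
    have "b \<noteq> \<infinity>"
    proof
      assume "b = \<infinity>"
      then have IA: "I = {a..}" using Icases by auto
      define y where "y = a + T a / \<kappa> + 1"
      have "0 \<le> T a / \<kappa>" using \<kappa>(1) Tpos[OF aI] by simp
      then have yI: "y \<in> I" using IA y_def by auto
      have "T y \<le> T a - \<kappa> * (T a / \<kappa> + 1)" using dec[OF aI yI] yI IA y_def by auto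
      also have "\<dots> = - \<kappa>" using \<kappa>(1) by (simp add: field_simps)
      finally show False using Tpos[OF yI] \<kappa>(1) by simp
    qed
    then obtain B where B: "b = ereal B" "a < B" "I = {a..<B}" using Icases by auto
    have "(T \<longlongrightarrow> 0) (at_left B)"
    proof (rule order_tendstoI)
      fix e :: real assume "e < 0"
      show "eventually (\<lambda>s. e < T s) (at_left B)"
        using eventually_at_left_real[OF B(2)]
      proof eventually_elim
        case (elim s)
        then have "s \<in> I" using B by auto
        from Tpos[OF this] show ?case using \<open>e < 0\<close> by linarith
      qed
    next
      fix e :: real assume e: "0 < e"
      show "eventually (\<lambda>s. T s < e) (at_left B)"
      proof (cases "\<exists>s0\<in>I. T s0 < e")
        case True
        then obtain s0 where s0: "s0 \<in> I" "T s0 < e" by auto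
        have "s0 < B" using s0 B by auto
        show ?thesis using eventually_at_left_real[OF \<open>s0 < B\<close>]
        proof eventually_elim
          case (elim s)
          then have "s \<in> I" using s0 B by auto
          then show ?case using dec'[OF s0(1) \<open>s \<in> I\<close>] elim s0 by simp
        qed
      next
        case False
        have "e \<le> T s \<and> T s \<le> T a" if "s \<in> I" for s
          using dec'[OF aI that] that B False by (auto simp: not_less)
        then have False using key[OF B(1,2) e, of "T a"] by blast
        then show ?thesis ..
      qed
    qed
    moreover have "T = (\<lambda>s. fst (\<gamma> s))" by (simp add: T_def fun_eq_iff)
    ultimately show "((\<lambda>s. fst (\<gamma> s)) \<longlongrightarrow> 0) (approach b)" using B by (simp add: approach_def)
  qed
qed

end
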